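(* Let $L$ be a simple Lie algebra over a field $k$ with $|k|>2$, generated by its pure extremal elements, such that there exists a Galois extension $k'/k$ of degree at most $2$ for which the extremal geometry of $L\otimes_k k'$ contains lines, and such that $L$ has symplectic pairs of extremal elements. Let $x,y,c,d\in E$ with $g(x,y)=g(c,d)=1$ such that the pairs $(x,c),(c,y),(y,d),(d,x)$ are symplectic; let $L=\bigoplus_i L_i$ and $L=\bigoplus_i L'_i$ be the $5$-gradings associated with $(x,y)$ and $(c,d)$ respectively, and put $V=L_{-1}\cap L'_{-1}$, $X=L_{-1}\cap L'_0$, $V'=L_{-1}\cap L'_1$, $X'=L_0\cap L'_{-1}$. Then $L_{-1}=V\oplus X\oplus V'$, $L_1=[y,V]\oplus[y,X]\oplus[y,V']$, $L'_{-1}=V\oplus X'\oplus[y,V]$, and $L'_1=V'\oplus[d,X']\oplus[y,V']$.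
   Context: A nonzero $a$ in a Lie algebra $M$ over $F$ is extremal if there is $g_a\colon M\to F$ with $[a,[a,u]]=2g_a(u)a$, $[[a,u],[a,w]]=g_a([u,w])a+g_a(w)[a,u]-g_a(u)[a,w]$, $[a,[u,[a,w]]]=g_a([u,w])a-g_a(w)[a,u]-g_a(u)[a,w]$ for all $u,w$; sandwiches satisfy $[a,[a,u]]=0=[a,[u,[a,w]]]$; pure = non-sandwich; $E$ = set of extremal elements of $L$; $g$ = unique symmetric bilinear form with $g(a,u)=g_a(u)$ for $a\in E$. Pure extremal $a,b$ with $Fa\ne Fb$ are collinear if $[a,b]=0$ and $\lambda a+\mu b$ is extremal or $0$ for all $\lambda,\mu$, symplectic if $[a,b]=0$ and $\lambda a+\mu b$ is extremal or $0$ only when $\lambda\mu=0$; the extremal geometry contains lines iff a collinear pair exists. For $a,b\in E$ with $g(a,b)=1$ the associated $5$-grading is $M_{-2}=ka$, $M_{-1}=[a,U]$, $M_0=\{l:[a,l]\in ka,[b,l]\in kb\}$, $M_1=[b,U]$, $M_2=kb$, $U=\{u:g(u,a)=g(u,b)=g(u,[a,b])=0\}$. *)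

theory Defs
  imports Complex_Main
begin

definition lie_algebra :: "('k::field \<Rightarrow> 'l::ab_group_add \<Rightarrow> 'l) \<Rightarrow> ('l \<Rightarrow> 'l \<Rightarrow> 'l) \<Rightarrow> bool" where
  "lie_algebra sm br \<longleftrightarrow> vector_space sm
     \<and> (\<forall>x y z. br (x + y) z = br x z + br y z)
     \<and> (\<forall>x y z. br x (y + z) = br x y + br x z)
     \<and> (\<forall>a x y. br (sm a x) y = sm a (br x y))
     \<and> (\<forall>a x y. br x (sm a y) = sm a (br x y))
     \<and> (\<forall>x. br x x = 0)
     \<and> (\<forall>x y z. br x (br y z) + br y (br z x) + br z (br x y) = 0)"

definition extremal_with :: "('k::field \<Rightarrow> 'l::ab_group_add \<Rightarrow> 'l) \<Rightarrow> ('l \<Rightarrow> 'l \<Rightarrow> 'l) \<Rightarrow> 'l \<Rightarrow> ('l \<Rightarrow> 'k) \<Rightarrow> bool" where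
  "extremal_with sm br a ga \<longleftrightarrow> a \<noteq> 0 \<and>
     (\<forall>u w. br a (br a u) = sm (2 * ga u) a
       \<and> br (br a u) (br a w) = sm (ga (br u w)) a + sm (ga w) (br a u) - sm (ga u) (br a w)
       \<and> br a (br u (br a w)) = sm (ga (br u w)) a - sm (ga w) (br a u) - sm (ga u) (br a w))"

definition extremal :: "('k::field \<Rightarrow> 'l::ab_group_add \<Rightarrow> 'l) \<Rightarrow> ('l \<Rightarrow> 'l \<Rightarrow> 'l) \<Rightarrow> 'l \<Rightarrow> bool" where
  "extremal sm br a \<longleftrightarrow> (\<exists>ga. extremal_with sm br a ga)"

definition sandwich :: "('k::field \<Rightarrow> 'l::ab_group_add \<Rightarrow> 'l) \<Rightarrow> ('l \<Rightarrow> 'l \<Rightarrow> 'l) \<Rightarrow> 'l \<Rightarrow> bool" where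
  "sandwich sm br a \<longleftrightarrow> extremal sm br a \<and>
     (\<forall>u w. br a (br a u) = 0 \<and> br a (br u (br a w)) = 0)"

definition pure_extremal :: "('k::field \<Rightarrow> 'l::ab_group_add \<Rightarrow> 'l) \<Rightarrow> ('l \<Rightarrow> 'l \<Rightarrow> 'l) \<Rightarrow> 'l \<Rightarrow> bool" where
  "pure_extremal sm br a \<longleftrightarrow> extremal sm br a \<and> \<not> sandwich sm br a"

definition lspan :: "('k::field \<Rightarrow> 'l::ab_group_add \<Rightarrow> 'l) \<Rightarrow> 'l \<Rightarrow> 'l set" where
  "lspan sm a = range (\<lambda>t. sm t a)"

definition collinear :: "('k::field \<Rightarrow> 'l::ab_group_add \<Rightarrow> 'l) \<Rightarrow> ('l \<Rightarrow> 'l \<Rightarrow> 'l) \<Rightarrow> 'l \<Rightarrow> 'l \<Rightarrow> bool" where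
  "collinear sm br a b \<longleftrightarrow> pure_extremal sm br a \<and> pure_extremal sm br b \<and>
     lspan sm a \<noteq> lspan sm b \<and> br a b = 0 \<and>
     (\<forall>s t. extremal sm br (sm s a + sm t b) \<or> sm s a + sm t b = 0)"

definition symplectic :: "('k::field \<Rightarrow> 'l::ab_group_add \<Rightarrow> 'l) \<Rightarrow> ('l \<Rightarrow> 'l \<Rightarrow> 'l) \<Rightarrow> 'l \<Rightarrow> 'l \<Rightarrow> bool" where
  "symplectic sm br a b \<longleftrightarrow> pure_extremal sm br a \<and> pure_extremal sm br b \<and>
     lspan sm a \<noteq> lspan sm b \<and> br a b = 0 \<and>
     (\<forall>s t. (extremal sm br (sm s a + sm t b) \<or> sm s a + sm t b = 0) \<longrightarrow> s * t = 0)"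

definition has_lines :: "('k::field \<Rightarrow> 'l::ab_group_add \<Rightarrow> 'l) \<Rightarrow> ('l \<Rightarrow> 'l \<Rightarrow> 'l) \<Rightarrow> bool" where
  "has_lines sm br \<longleftrightarrow> (\<exists>a b. collinear sm br a b)"

definition lie_subalgebra :: "('k::field \<Rightarrow> 'l::ab_group_add \<Rightarrow> 'l) \<Rightarrow> ('l \<Rightarrow> 'l \<Rightarrow> 'l) \<Rightarrow> 'l set \<Rightarrow> bool" where
  "lie_subalgebra sm br A \<longleftrightarrow> module.subspace sm A \<and> (\<forall>x\<in>A. \<forall>y\<in>A. br x y \<in> A)"

definition lie_ideal :: "('k::field \<Rightarrow> 'l::ab_group_add \<Rightarrow> 'l) \<Rightarrow> ('l \<Rightarrow> 'l \<Rightarrow> 'l) \<Rightarrow> 'l set \<Rightarrow> bool" where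
  "lie_ideal sm br I \<longleftrightarrow> module.subspace sm I \<and> (\<forall>x\<in>I. \<forall>y. br y x \<in> I)"

definition lie_simple :: "('k::field \<Rightarrow> 'l::ab_group_add \<Rightarrow> 'l) \<Rightarrow> ('l \<Rightarrow> 'l \<Rightarrow> 'l) \<Rightarrow> bool" where
  "lie_simple sm br \<longleftrightarrow> (\<exists>x y. br x y \<noteq> 0) \<and>
     (\<forall>I. lie_ideal sm br I \<longrightarrow> I = {0} \<or> I = UNIV)"

definition generated_by_pure_extremal :: "('k::field \<Rightarrow> 'l::ab_group_add \<Rightarrow> 'l) \<Rightarrow> ('l \<Rightarrow> 'l \<Rightarrow> 'l) \<Rightarrow> bool" where
  "generated_by_pure_extremal sm br \<longleftrightarrow>
     (\<forall>A. lie_subalgebra sm br A \<and> {a. pure_extremal sm br a} \<subseteq> A \<longrightarrow> A = UNIV)"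

definition field_hom :: "('a::field \<Rightarrow> 'b::field) \<Rightarrow> bool" where
  "field_hom f \<longleftrightarrow> f 1 = 1 \<and> (\<forall>x y. f (x + y) = f x + f y) \<and> (\<forall>x y. f (x * y) = f x * f y)"

text \<open>sigma : k \<rightarrow> K makes K a Galois extension of k of degree at most 2:
  K is spanned by two elements over sigma(k), and the fixed field of the group of
  automorphisms of K over sigma(k) is exactly sigma(k).\<close>
definition galois_ext_deg_le2 :: "('k::field \<Rightarrow> 'K::field) \<Rightarrow> bool" where
  "galois_ext_deg_le2 \<sigma> \<longleftrightarrow> field_hom \<sigma> \<and>
     (\<exists>e1 e2. \<forall>z. \<exists>s t. z = \<sigma> s * e1 + \<sigma> t * e2) \<and>
     (\<forall>z. (\<forall>\<tau>. bij \<tau> \<and> field_hom \<tau> \<and> (\<forall>a. \<tau> (\<sigma> a) = \<sigma> a) \<longrightarrow> \<tau> z = z) \<longrightarrow> z \<in> range \<sigma>)"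

text \<open>(smK, brK, phi) is the scalar extension L \<otimes>_k K: a K-Lie algebra with a
  k-semilinear injective Lie homomorphism phi whose image spans over K and which maps
  k-independent sets to K-independent sets (i.e. the K-linear extension
  L \<otimes>_k K \<rightarrow> M of phi is an isomorphism).\<close>
definition scalar_extension ::
  "('k::field \<Rightarrow> 'l::ab_group_add \<Rightarrow> 'l) \<Rightarrow> ('l \<Rightarrow> 'l \<Rightarrow> 'l) \<Rightarrow> ('k \<Rightarrow> 'K::field)
   \<Rightarrow> ('K \<Rightarrow> 'm::ab_group_add \<Rightarrow> 'm) \<Rightarrow> ('m \<Rightarrow> 'm \<Rightarrow> 'm) \<Rightarrow> ('l \<Rightarrow> 'm) \<Rightarrow> bool" where
  "scalar_extension sm br \<sigma> smK brK \<phi> \<longleftrightarrow> lie_algebra smK brK \<and>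
     (\<forall>x y. \<phi> (x + y) = \<phi> x + \<phi> y) \<and>
     (\<forall>a x. \<phi> (sm a x) = smK (\<sigma> a) (\<phi> x)) \<and>
     (\<forall>x y. \<phi> (br x y) = brK (\<phi> x) (\<phi> y)) \<and>
     inj \<phi> \<and>
     module.span smK (range \<phi>) = UNIV \<and>
     (\<forall>S. \<not> module.dependent sm S \<longrightarrow> \<not> module.dependent smK (\<phi> ` S))"

definition extremal_form :: "('k::field \<Rightarrow> 'l::ab_group_add \<Rightarrow> 'l) \<Rightarrow> ('l \<Rightarrow> 'l \<Rightarrow> 'l) \<Rightarrow> ('l \<Rightarrow> 'l \<Rightarrow> 'k) \<Rightarrow> bool" where
  "extremal_form sm br g \<longleftrightarrow>
     (\<forall>x y z. g (x + y) z = g x z + g y z) \<and>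
     (\<forall>a x y. g (sm a x) y = a * g x y) \<and>
     (\<forall>x y. g x y = g y x) \<and>
     (\<forall>a. extremal sm br a \<longrightarrow> extremal_with sm br a (g a))"

text \<open>The 5-grading associated with (a,b), g(a,b) = 1.\<close>
definition gradU :: "('l::ab_group_add \<Rightarrow> 'l \<Rightarrow> 'l) \<Rightarrow> ('l \<Rightarrow> 'l \<Rightarrow> 'k::field) \<Rightarrow> 'l \<Rightarrow> 'l \<Rightarrow> 'l set" where
  "gradU br g a b = {u. g u a = 0 \<and> g u b = 0 \<and> g u (br a b) = 0}"

definition grading :: "('k::field \<Rightarrow> 'l::ab_group_add \<Rightarrow> 'l) \<Rightarrow> ('l \<Rightarrow> 'l \<Rightarrow> 'l) \<Rightarrow> ('l \<Rightarrow> 'l \<Rightarrow> 'k)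
    \<Rightarrow> 'l \<Rightarrow> 'l \<Rightarrow> int \<Rightarrow> 'l set" where
  "grading sm br g a b i =
     (if i = -2 then lspan sm a
      else if i = -1 then br a ` gradU br g a b
      else if i = 0 then {l. br a l \<in> lspan sm a \<and> br b l \<in> lspan sm b}
      else if i = 1 then br b ` gradU br g a b
      else if i = 2 then lspan sm b
      else {0})"

definition direct_sum3 :: "'l::ab_group_add set \<Rightarrow> 'l set \<Rightarrow> 'l set \<Rightarrow> 'l set \<Rightarrow> bool" where
  "direct_sum3 S A B C \<longleftrightarrow> S = {a + b + c | a b c. a \<in> A \<and> b \<in> B \<and> c \<in> C} \<and>
     (\<forall>a\<in>A. \<forall>b\<in>B. \<forall>c\<in>C. a + b + c = 0 \<longrightarrow> a = 0 \<and> b = 0 \<and> c = 0)"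

end

theory Submission
  imports Defs
begin


locale lie_setup =
  fixes sm :: "'k::field \<Rightarrow> 'l::ab_group_add \<Rightarrow> 'l" and br :: "'l \<Rightarrow> 'l \<Rightarrow> 'l" and g :: "'l \<Rightarrow> 'l \<Rightarrow> 'k"
  assumes lie: "lie_algebra sm br" and simple: "lie_simple sm br" and gform: "extremal_form sm br g"
begin

lemma vsp: "vector_space sm" using lie unfolding lie_algebra_def by blast
sublocale vs: vector_space sm by (rule vsp)

lemma br_addL[simp]: "br (x + y) z = br x z + br y z" using lie unfolding lie_algebra_def by blast
lemma br_addR[simp]: "br x (y + z) = br x y + br x z" using lie unfolding lie_algebra_def by blast
lemma br_smL[simp]: "br (sm a x) y = sm a (br x y)" using lie unfolding lie_algebra_def by blast
lemma br_smR[simp]: "br x (sm a y) = sm a (br x y)" using lie unfolding lie_algebra_def by blast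
lemma br_self[simp]: "br x x = 0" using lie unfolding lie_algebra_def by blast
lemma jac0: "br x (br y z) + br y (br z x) + br z (br x y) = 0" using lie unfolding lie_algebra_def by blast
lemma br_zeroL[simp]: "br 0 x = 0" using br_addL[of 0 0 x] by simp
lemma br_zeroR[simp]: "br x 0 = 0" using br_addR[of x 0 0] by simp
lemma br_negL[simp]: "br (- x) y = - br x y"
  using br_addL[of x "-x" y] by (simp add: add_eq_0_iff)
lemma br_negR[simp]: "br x (- y) = - br x y"
  using br_addR[of x y "-y"] by (simp add: add_eq_0_iff)
lemma br_diffL[simp]: "br (x - y) z = br x z - br y z" using br_addL[of x "-y" z] by simp
lemma br_diffR[simp]: "br x (y - z) = br x y - br x z" using br_addR[of x y "-z"] by simp
lemma br_anti: "br x y = - br y x"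
proof -
  have "br x y + br y x = br (x+y) (x+y)" by (simp only: br_addL br_addR) simp
  also have "... = 0" by (rule br_self)
  finally show ?thesis by (simp add: eq_neg_iff_add_eq_0)
qed
lemma jacobi: "br x (br y z) = br (br x y) z + br y (br x z)"
proof -
  have j: "br x (br y z) + br y (br z x) + br z (br x y) = 0" by (rule jac0)
  have a1: "br (br x y) z = - br z (br x y)" by (rule br_anti)
  have a2: "br y (br x z) = - br y (br z x)" using br_anti[of x z] by simp
  from j have "br x (br y z) = - br y (br z x) - br z (br x y)"
    by (simp add: eq_neg_iff_add_eq_0 algebra_simps)
  then show ?thesis unfolding a1 a2 by simp
qed

lemma g_addL[simp]: "g (x + y) z = g x z + g y z" using gform unfolding extremal_form_def by blast
lemma g_smL[simp]: "g (sm a x) y = a * g x y" using gform unfolding extremal_form_def by blast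
lemma g_sym: "g x y = g y x" using gform unfolding extremal_form_def by blast
lemma g_addR[simp]: "g z (x + y) = g z x + g z y" using g_addL g_sym by metis
lemma g_smR[simp]: "g y (sm a x) = a * g y x" using g_smL g_sym by metis
lemma g_zeroL[simp]: "g 0 y = 0" using g_smL[of 0 0 y] by simp
lemma g_zeroR[simp]: "g y 0 = 0" using g_smR[of y 0 0] by simp
lemma g_negL[simp]: "g (- x) y = - g x y" using g_smL[of "-1" x y] by simp
lemma g_negR[simp]: "g y (- x) = - g y x" using g_smR[of y "-1" x] by simp
lemma g_diffL[simp]: "g (x - y) z = g x z - g y z" using g_addL[of x "-y" z] by simp
lemma g_diffR[simp]: "g z (x - y) = g z x - g z y" using g_addR[of z x "-y"] by simp


lemma lspan_iff: "v \<in> lspan sm a \<longleftrightarrow> (\<exists>t. v = sm t a)"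
  unfolding lspan_def by auto

lemma AD:
  assumes a0: "a \<noteq> 0" and h: "\<And>w. br a w \<in> lspan sm a"
  shows False
proof -
  let ?I = "lspan sm a"
  have sub: "module.subspace sm ?I"
    unfolding vs.subspace_def
  proof (intro conjI allI ballI)
    show "0 \<in> ?I" unfolding lspan_iff by (rule exI[of _ 0]) simp
  next
    fix x y assume "x \<in> ?I" "y \<in> ?I"
    then obtain s t where "x = sm s a" "y = sm t a" by (auto simp: lspan_iff)
    then have "x + y = sm (s+t) a" by (simp add: vs.scale_left_distrib)
    then show "x + y \<in> ?I" unfolding lspan_iff by blast
  next
    fix c x assume "x \<in> ?I"
    then obtain s where "x = sm s a" by (auto simp: lspan_iff)
    then have "sm c x = sm (c*s) a" by simp
    then show "sm c x \<in> ?I" unfolding lspan_iff by blast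
  qed
  have cl: "\<forall>x\<in>?I. \<forall>y. br y x \<in> ?I"
  proof (intro ballI allI)
    fix x y assume "x \<in> ?I"
    then obtain s where xs: "x = sm s a" by (auto simp: lspan_iff)
    obtain t where "br a y = sm t a" using h[of y] by (auto simp: lspan_iff)
    then have "br y a = sm (-t) a" using br_anti[of y a] by simp
    then have "br y x = sm (s*(-t)) a" unfolding xs by simp
    then show "br y x \<in> ?I" unfolding lspan_iff by blast
  qed
  have "lie_ideal sm br ?I"
    unfolding lie_ideal_def using sub cl by blast
  then have "?I = {0} \<or> ?I = UNIV" using simple unfolding lie_simple_def by blast
  moreover have "a \<in> ?I" unfolding lspan_iff by (intro exI[of _ 1]) simp
  ultimately have "?I = UNIV" using a0 by blast
  moreover obtain p q where "br p q \<noteq> 0" using simple unfolding lie_simple_def by blast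
  ultimately show False
    by (metis UNIV_I br_self br_smL br_smR lspan_iff vs.scale_zero_right)
qed

lemma pat:
  assumes a0: "a \<noteq> 0" and h: "\<And>w. sm (f w) a = sm c (br a w)"
  shows "c = 0 \<and> (\<forall>w. f w = 0)"
proof -
  have c0: "c = 0"
  proof (rule ccontr)
    assume c: "c \<noteq> 0"
    have "br a w \<in> lspan sm a" for w
    proof -
      have "sm (inverse c) (sm (f w) a) = br a w" using h[of w] c by simp
      then show ?thesis unfolding lspan_iff by (metis vs.scale_scale)
    qed
    then show False using AD a0 by blast
  qed
  then show ?thesis using h a0 by simp
qed

lemma ext_with: "extremal sm br a \<Longrightarrow> extremal_with sm br a (g a)"
  using gform unfolding extremal_form_def by blast

lemma ext_nz: "extremal sm br a \<Longrightarrow> a \<noteq> 0"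
  unfolding extremal_def extremal_with_def by blast

lemma E1: "extremal sm br a \<Longrightarrow> br a (br a u) = sm (2 * g a u) a"
  using ext_with unfolding extremal_with_def by blast
lemma E2: "extremal sm br a \<Longrightarrow> br (br a u) (br a w) = sm (g a (br u w)) a + sm (g a w) (br a u) - sm (g a u) (br a w)"
  using ext_with unfolding extremal_with_def by blast
lemma E3: "extremal sm br a \<Longrightarrow> br a (br u (br a w)) = sm (g a (br u w)) a - sm (g a w) (br a u) - sm (g a u) (br a w)"
  using ext_with unfolding extremal_with_def by blast

lemma comm_lemma:
  assumes ea: "extremal sm br a" and c: "br a b = 0"
  shows "g a b = 0 \<and> (\<forall>w. g a (br b w) = 0)"
proof -
  have "sm (g a (br b w)) a = sm (g a b) (br a w)" for w
  proof -
    have "br a (br b (br a w)) = br b (br a (br a w))" using jacobi[of a b "br a w"] c by simp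
    also have "... = 0" using E1[OF ea, of w] br_anti[of b a] c by simp
    finally show ?thesis using E3[OF ea, of b w] c by simp
  qed
  then show ?thesis using pat[OF ext_nz[OF ea], of "\<lambda>w. g a (br b w)" "g a b"] by blast
qed

lemma g_self_adj:
  assumes ea: "extremal sm br a"
  shows "g a a = 0" "g a (br a w) = 0"
proof -
  have "br a a = 0" by simp
  then show "g a a = 0" "g a (br a w) = 0" using comm_lemma[OF ea] by blast+
qed


lemma witness_unique:
  assumes pe: "pure_extremal sm br e" and w1: "extremal_with sm br e G1" and w2: "extremal_with sm br e G2"
    and l1a: "\<And>u v. G1 (u + v) = G1 u + G1 v" and l1s: "\<And>t u. G1 (sm t u) = t * G1 u"
    and l2a: "\<And>u v. G2 (u + v) = G2 u + G2 v" and l2s: "\<And>t u. G2 (sm t u) = t * G2 u"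
  shows "G1 u = G2 u"
proof -
  have e0: "e \<noteq> 0" using w1 unfolding extremal_with_def by blast
  have A1: "br e (br e v) = sm (2 * G1 v) e" for v using w1 unfolding extremal_with_def by blast
  have A2: "br e (br e v) = sm (2 * G2 v) e" for v using w2 unfolding extremal_with_def by blast
  have B1: "br (br e v) (br e w) = sm (G1 (br v w)) e + sm (G1 w) (br e v) - sm (G1 v) (br e w)" for v w
    using w1 unfolding extremal_with_def by blast
  have B2: "br (br e v) (br e w) = sm (G2 (br v w)) e + sm (G2 w) (br e v) - sm (G2 v) (br e w)" for v w
    using w2 unfolding extremal_with_def by blast
  have C1: "br e (br v (br e w)) = sm (G1 (br v w)) e - sm (G1 w) (br e v) - sm (G1 v) (br e w)" for v w
    using w1 unfolding extremal_with_def by blast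
  have C2: "br e (br v (br e w)) = sm (G2 (br v w)) e - sm (G2 w) (br e v) - sm (G2 v) (br e w)" for v w
    using w2 unfolding extremal_with_def by blast
  define d where "d v = G2 v - G1 v" for v
  have da: "d (v + w) = d v + d w" for v w unfolding d_def using l1a l2a by simp
  have ds: "d (sm t v) = t * d v" for t v unfolding d_def using l1s l2s by (simp add: algebra_simps)
  have D2: "sm (d v) (br e w) = sm (d (br v w)) e + sm (d w) (br e v)" for v w
  proof -
    have "sm (G2 (br v w)) e + sm (G2 w) (br e v) - sm (G2 v) (br e w)
        = sm (G1 (br v w)) e + sm (G1 w) (br e v) - sm (G1 v) (br e w)" using B1 B2 by metis
    then show ?thesis unfolding d_def by (simp add: vs.scale_left_diff_distrib algebra_simps)
  qed
  have D3: "sm (d (br v w)) e - sm (d w) (br e v) - sm (d v) (br e w) = 0" for v w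
  proof -
    have "sm (G2 (br v w)) e - sm (G2 w) (br e v) - sm (G2 v) (br e w)
        = sm (G1 (br v w)) e - sm (G1 w) (br e v) - sm (G1 v) (br e w)" using C1 C2 by metis
    then show ?thesis unfolding d_def by (simp add: vs.scale_left_diff_distrib algebra_simps)
  qed
  show ?thesis
  proof (cases "(2::'k) = 0")
    case False
    have "sm (2 * G1 u) e = sm (2 * G2 u) e" using A1 A2 by metis
    then show ?thesis using False e0 by simp
  next
    case two: True
    show ?thesis
    proof (rule ccontr)
      assume ne: "G1 u \<noteq> G2 u"
      define u0 where "u0 = u"
      have d0: "d u0 \<noteq> 0" using ne unfolding d_def u0_def by simp
      define z where "z = br e u0"
      have znot: "z \<notin> lspan sm e"
      proof
        assume "z \<in> lspan sm e"
        then obtain t where zt: "z = sm t e" by (auto simp: lspan_iff)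
        have "br e w \<in> lspan sm e" for w
        proof -
          have "sm (d u0) (br e w) = sm (d (br u0 w) + d w * t) e"
            using D2[of u0 w] zt unfolding z_def by (simp add: vs.scale_left_distrib)
          then have "br e w = sm (inverse (d u0) * (d (br u0 w) + d w * t)) e"
            using d0 by (metis vs.scale_scale left_inverse vs.scale_one)
          then show ?thesis unfolding lspan_iff by blast
        qed
        then show False using AD e0 by blast
      qed
      have indep: "b = 0" if "sm a e + sm b z = 0" for a b
      proof (rule ccontr)
        assume b0: "b \<noteq> 0"
        have "sm b z = sm (-a) e" using that by (simp add: eq_neg_iff_add_eq_0 add.commute)
        then have "z = sm (inverse b * (-a)) e" using b0 by (metis vs.scale_scale left_inverse vs.scale_one)
        then show False using znot unfolding lspan_iff by blast
      qed
      have K: "G1 w = 0" if dw: "d w = 0" for w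
      proof -
        define bt where "bt = inverse (d u0) * d (br u0 w)"
        have "sm (d u0) (br e w) = sm (d (br u0 w)) e" using D2[of u0 w] dw by simp
        then have bew: "br e w = sm bt e" unfolding bt_def using d0
          by (metis vs.scale_scale left_inverse vs.scale_one)
        have "br e (br u0 (br e w)) = sm bt (br e (br u0 e))" unfolding bew by simp
        also have "br u0 e = - z" unfolding z_def by (rule br_anti)
        also have "br e (- z) = 0" unfolding z_def using A1[of u0] two by simp
        finally have "br e (br u0 (br e w)) = 0" by simp
        then have "sm (G1 (br u0 w)) e - sm (G1 w) z - sm (G1 u0) (br e w) = 0"
          using C1[of u0 w] unfolding z_def by simp
        then have "sm (G1 (br u0 w) - G1 u0 * bt) e + sm (- G1 w) z = 0"
          unfolding bew by (simp add: vs.scale_left_diff_distrib algebra_simps)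
        then have "- G1 w = 0" by (rule indep)
        then show ?thesis by simp
      qed
      define al where "al = inverse (d u0) * G1 u0"
      have lin: "G1 v = al * d v" for v
      proof -
        define w where "w = v - sm (inverse (d u0) * d v) u0"
        have "d w = d v - inverse (d u0) * d v * d u0"
          unfolding w_def using da[of v "- sm (inverse (d u0) * d v) u0"] ds[of "-1" "sm (inverse (d u0) * d v) u0"]
          ds[of "inverse (d u0) * d v" u0] by simp
        also have "... = 0" using d0 by simp
        finally have "G1 w = 0" by (rule K)
        moreover have "G1 w = G1 v - inverse (d u0) * d v * G1 u0"
          unfolding w_def using l1a[of v "- sm (inverse (d u0) * d v) u0"] l1s[of "-1" "sm (inverse (d u0) * d v) u0"]
          l1s[of "inverse (d u0) * d v" u0] by simp
        ultimately show ?thesis unfolding al_def by (simp add: algebra_simps)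
      qed
      have "sandwich sm br e"
        unfolding sandwich_def
      proof (intro conjI allI)
        show "extremal sm br e" using pe unfolding pure_extremal_def by blast
        fix v w
        show "br e (br e v) = 0" using A1[of v] two by simp
        have "br e (br v (br e w)) = sm al (sm (d (br v w)) e - sm (d w) (br e v) - sm (d v) (br e w))"
          using C1[of v w] unfolding lin by (simp add: vs.scale_right_diff_distrib)
        then show "br e (br v (br e w)) = 0" using D3[of v w] by simp
      qed
      then show False using pe unfolding pure_extremal_def by blast
    qed
  qed
qed



lemma sm2: "sm (2 * c) v = sm c v + sm c v"
  unfolding mult_2 by (rule vs.scale_left_distrib)

definition ephi :: "'l \<Rightarrow> 'l \<Rightarrow> 'l" where "ephi a l = l + br a l + sm (g a l) a"
definition epsi :: "'l \<Rightarrow> 'l \<Rightarrow> 'l" where "epsi a l = l - br a l + sm (g a l) a"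

lemma psi_phi: assumes ea: "extremal sm br a" shows "epsi a (ephi a l) = l"
proof -
  have "epsi a (ephi a l) = l + br a l + sm (g a l) a - (br a l + br a (br a l)) + sm (g a l) a"
    unfolding epsi_def ephi_def using g_self_adj[OF ea] by (simp add: vs.scale_left_distrib)
  also have "... = l" using E1[OF ea, of l] by (simp add: sm2 vs.scale_left_distrib algebra_simps)
  finally show ?thesis .
qed

lemma phi_psi: assumes ea: "extremal sm br a" shows "ephi a (epsi a l) = l"
proof -
  have "ephi a (epsi a l) = l - br a l + sm (g a l) a + (br a l - br a (br a l)) + sm (g a l) a"
    unfolding epsi_def ephi_def using g_self_adj[OF ea] by (simp add: vs.scale_left_distrib)
  also have "... = l" using E1[OF ea, of l] by (simp add: sm2 vs.scale_left_distrib algebra_simps)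
  finally show ?thesis .
qed

lemma phi_add: "ephi a (u + w) = ephi a u + ephi a w"
  unfolding ephi_def by (simp add: vs.scale_left_distrib algebra_simps)
lemma phi_sm: "ephi a (sm t u) = sm t (ephi a u)"
  unfolding ephi_def by (simp add: vs.scale_right_distrib algebra_simps)
lemma psi_add: "epsi a (u + w) = epsi a u + epsi a w"
  unfolding epsi_def by (simp add: vs.scale_left_distrib algebra_simps)
lemma psi_sm: "epsi a (sm t u) = sm t (epsi a u)"
  unfolding epsi_def by (simp add: vs.scale_right_distrib vs.scale_right_diff_distrib algebra_simps)

lemma phi_hom: assumes ea: "extremal sm br a" shows "ephi a (br u w) = br (ephi a u) (ephi a w)"
proof -
  have h1: "br u a = - br a u" by (rule br_anti)
  have h2: "br (br a u) a = - sm (2 * g a u) a" using br_anti[of "br a u" a] E1[OF ea, of u] by simp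
  have h3: "br a (br a w) = sm (2 * g a w) a" using E1[OF ea] by simp
  have h4: "br (br a u) (br a w) = sm (g a (br u w)) a + sm (g a w) (br a u) - sm (g a u) (br a w)"
    using E2[OF ea] by simp
  have h5: "br a (br u w) = br (br a u) w + br u (br a w)" by (rule jacobi)
  show ?thesis unfolding ephi_def
    by (simp add: h1 h2 h3 h4 h5 algebra_simps)
qed

lemma psi_hom: assumes ea: "extremal sm br a" shows "epsi a (br u w) = br (epsi a u) (epsi a w)"
proof -
  have "br (epsi a u) (epsi a w) = epsi a (ephi a (br (epsi a u) (epsi a w)))" using psi_phi[OF ea] by simp
  also have "ephi a (br (epsi a u) (epsi a w)) = br u w" using phi_hom[OF ea] phi_psi[OF ea] by simp
  finally show ?thesis by simp
qed

lemma transport: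
  assumes ea: "extremal sm br a" and wb: "extremal_with sm br b G"
  shows "extremal_with sm br (ephi a b) (\<lambda>v. G (epsi a v))"
proof -
  have b0: "b \<noteq> 0" using wb unfolding extremal_with_def by blast
  have nz: "ephi a b \<noteq> 0"
  proof
    assume "ephi a b = 0"
    then have "epsi a (ephi a b) = epsi a 0" by simp
    then show False using psi_phi[OF ea] b0 unfolding epsi_def by simp
  qed
  have phb: "br (ephi a b) v = ephi a (br b (epsi a v))" for v
    using phi_hom[OF ea] phi_psi[OF ea] by metis
  have phd: "ephi a (x - y) = ephi a x - ephi a y" for x y
    using phi_add[of a "x - y" y] by (simp add: algebra_simps)
  show ?thesis unfolding extremal_with_def
  proof (intro conjI nz allI)
    fix u w
    have w1: "br b (br b v) = sm (2 * G v) b" for v using wb unfolding extremal_with_def by blast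
    have w2: "br (br b v) (br b v') = sm (G (br v v')) b + sm (G v') (br b v) - sm (G v) (br b v')" for v v'
      using wb unfolding extremal_with_def by blast
    have w3: "br b (br v (br b v')) = sm (G (br v v')) b - sm (G v') (br b v) - sm (G v) (br b v')" for v v'
      using wb unfolding extremal_with_def by blast
    have pu: "u = ephi a (epsi a u)" "w = ephi a (epsi a w)" using phi_psi[OF ea] by auto
    show "br (ephi a b) (br (ephi a b) u) = sm (2 * G (epsi a u)) (ephi a b)"
      unfolding phb using psi_phi[OF ea] w1 phi_sm by simp
    show "br (br (ephi a b) u) (br (ephi a b) w) = sm (G (epsi a (br u w))) (ephi a b) + sm (G (epsi a w)) (br (ephi a b) u) - sm (G (epsi a u)) (br (ephi a b) w)"
      unfolding phb psi_hom[OF ea] by (simp add: phi_hom[OF ea, symmetric] w2 phd phi_add phi_sm)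
    show "br (ephi a b) (br u (br (ephi a b) w)) = sm (G (epsi a (br u w))) (ephi a b) - sm (G (epsi a w)) (br (ephi a b) u) - sm (G (epsi a u)) (br (ephi a b) w)"
      unfolding phb psi_hom[OF ea]
      apply (subst (2) pu(1))
      by (simp add: phi_hom[OF ea, symmetric] psi_phi[OF ea] w3 phd phi_add phi_sm)
  qed
qed


lemma psi_zero: "epsi a 0 = 0" unfolding epsi_def by simp

lemma pure_transport:
  assumes ea: "extremal sm br a" and pb: "pure_extremal sm br b"
  shows "pure_extremal sm br (ephi a b)"
proof -
  have eb: "extremal sm br b" using pb unfolding pure_extremal_def by blast
  have ex: "extremal sm br (ephi a b)"
    unfolding extremal_def using transport[OF ea ext_with[OF eb]] by blast
  have "\<not> sandwich sm br (ephi a b)"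
  proof
    assume "sandwich sm br (ephi a b)"
    then have s1: "br (ephi a b) (br (ephi a b) u) = 0" and s2: "br (ephi a b) (br u (br (ephi a b) w)) = 0" for u w
      unfolding sandwich_def by blast+
    have "sandwich sm br b" unfolding sandwich_def
    proof (intro conjI allI eb)
      fix u w
      have "br b (br b u) = epsi a (br (ephi a b) (br (ephi a b) (ephi a u)))"
        by (simp add: psi_hom[OF ea] psi_phi[OF ea])
      then show "br b (br b u) = 0" using s1 psi_zero by simp
      have "br b (br u (br b w)) = epsi a (br (ephi a b) (br (ephi a u) (br (ephi a b) (ephi a w))))"
        by (simp add: psi_hom[OF ea] psi_phi[OF ea])
      then show "br b (br u (br b w)) = 0" using s2 psi_zero by simp
    qed
    then show False using pb unfolding pure_extremal_def by blast
  qed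
  then show ?thesis using ex unfolding pure_extremal_def by blast
qed

lemma ASSOC:
  assumes ea: "extremal sm br a" and pb: "pure_extremal sm br b"
  shows "g (br a b) u = - g b (br a u)"
proof -
  have eb: "extremal sm br b" using pb unfolding pure_extremal_def by blast
  let ?e = "ephi a b"
  have pe: "pure_extremal sm br ?e" by (rule pure_transport[OF ea pb])
  have ee: "extremal sm br ?e" using pe unfolding pure_extremal_def by blast
  have "g ?e u = g b (epsi a u)"
    by (rule witness_unique[OF pe ext_with[OF ee] transport[OF ea ext_with[OF eb]]])
       (simp_all add: psi_add psi_sm)
  then have "g b u + g (br a b) u + g a b * g a u = g b u - g b (br a u) + g a u * g b a"
    unfolding ephi_def epsi_def by simp
  then have "g b (br a u) + g (br a b) u = 0" using g_sym[of a b] by (simp add: algebra_simps)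
  then show ?thesis by (simp add: eq_neg_iff_add_eq_0 add.commute)
qed

lemma ASSOC2:
  assumes pa: "pure_extremal sm br a" and pb: "pure_extremal sm br b"
  shows "g (br a b) u = g a (br b u)"
proof -
  have ea: "extremal sm br a" using pa unfolding pure_extremal_def by blast
  have eb: "extremal sm br b" using pb unfolding pure_extremal_def by blast
  have "g (br b a) u = - g a (br b u)" by (rule ASSOC[OF eb pa])
  then show ?thesis using br_anti[of b a] by simp
qed

end



context lie_setup begin

lemma solve3: "(p::'a::ab_group_add) = y - z - w \<Longrightarrow> z = y - w - p"
  by (simp add: algebra_simps)

lemma lspan_self: "a \<in> lspan sm a" unfolding lspan_iff by (rule exI[of _ 1]) simp
lemma lspan_zero: "0 \<in> lspan sm a" unfolding lspan_iff by (rule exI[of _ 0]) simp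
lemma lspan_sm: "v \<in> lspan sm a \<Longrightarrow> sm c v \<in> lspan sm a"
  unfolding lspan_iff by (metis vs.scale_scale)
lemma lspan_add: "v \<in> lspan sm a \<Longrightarrow> w \<in> lspan sm a \<Longrightarrow> v + w \<in> lspan sm a"
  unfolding lspan_iff by (metis vs.scale_left_distrib)
lemma lspan_neg: "v \<in> lspan sm a \<Longrightarrow> - v \<in> lspan sm a"
  using lspan_sm[of v a "-1"] by simp
lemma lspan_diff: "v \<in> lspan sm a \<Longrightarrow> w \<in> lspan sm a \<Longrightarrow> v - w \<in> lspan sm a"
  using lspan_add[of v a "- w"] lspan_neg[of w a] by simp
lemma lspan_sm_inv: "sm c v \<in> lspan sm a \<Longrightarrow> c \<noteq> 0 \<Longrightarrow> v \<in> lspan sm a"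
  using lspan_sm[of "sm c v" a "inverse c"] by simp

lemmas vsimps = vs.scale_right_distrib vs.scale_right_diff_distrib vs.scale_left_distrib vs.scale_left_diff_distrib sm2

definition pm2 :: "'l \<Rightarrow> 'l \<Rightarrow> 'l \<Rightarrow> 'l" where "pm2 a b l = sm (g b l) a"
definition um :: "'l \<Rightarrow> 'l \<Rightarrow> 'l \<Rightarrow> 'l" where
  "um a b l = - br b l + sm (g a (br b l)) b - sm (g b l) (br a b)"
definition pm1 :: "'l \<Rightarrow> 'l \<Rightarrow> 'l \<Rightarrow> 'l" where "pm1 a b l = br a (um a b l)"
definition p0 :: "'l \<Rightarrow> 'l \<Rightarrow> 'l \<Rightarrow> 'l" where
  "p0 a b l = l - pm2 a b l - pm1 a b l - pm1 b a l - pm2 b a l"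

lemma p0_sym: "p0 b a l = p0 a b l" unfolding p0_def by (simp add: algebra_simps)

lemma pm2_add: "pm2 a b (l + m) = pm2 a b l + pm2 a b m" unfolding pm2_def by (simp add: vs.scale_left_distrib)
lemma pm2_sm: "pm2 a b (sm t l) = sm t (pm2 a b l)" unfolding pm2_def by simp
lemma um_add: "um a b (l + m) = um a b l + um a b m" unfolding um_def by (simp add: vs.scale_left_distrib algebra_simps)
lemma um_sm: "um a b (sm t l) = sm t (um a b l)" unfolding um_def by (simp add: vs.scale_right_diff_distrib vs.scale_right_distrib)
lemma pm1_add: "pm1 a b (l + m) = pm1 a b l + pm1 a b m" unfolding pm1_def by (simp add: um_add)
lemma pm1_sm: "pm1 a b (sm t l) = sm t (pm1 a b l)" unfolding pm1_def by (simp add: um_sm)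
lemma p0_add: "p0 a b (l + m) = p0 a b l + p0 a b m" unfolding p0_def by (simp add: pm1_add pm2_add algebra_simps)
lemma p0_sm: "p0 a b (sm t l) = sm t (p0 a b l)" unfolding p0_def by (simp add: pm1_sm pm2_sm vs.scale_right_diff_distrib)

definition proj :: "'l \<Rightarrow> 'l \<Rightarrow> int \<Rightarrow> 'l \<Rightarrow> 'l" where
  "proj a b i l = (if i = -2 then pm2 a b l else if i = -1 then pm1 a b l else if i = 0 then p0 a b l
     else if i = 1 then pm1 b a l else if i = 2 then pm2 b a l else 0)"

lemma proj_add: "proj a b i (l + m) = proj a b i l + proj a b i m"
  unfolding proj_def by (simp add: pm1_add pm2_add p0_add)
lemma proj_sm: "proj a b i (sm t l) = sm t (proj a b i l)"
  unfolding proj_def by (simp add: pm1_sm pm2_sm p0_sm)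
lemma proj_zero: "proj a b i 0 = 0"
  using proj_sm[of a b i 0 0] by simp
lemma proj_neg: "proj a b i (- l) = - proj a b i l"
  using proj_sm[of a b i "-1" l] by simp
lemma proj_diff: "proj a b i (l - m) = proj a b i l - proj a b i m"
  using proj_add[of a b i l "- m"] proj_neg[of a b i m] by simp

lemma gradU_sym: "gradU br g b a = gradU br g a b"
  unfolding gradU_def using br_anti[of b a] by auto

lemma grading_sym: "grading sm br g b a (- i) = grading sm br g a b i"
  unfolding grading_def using gradU_sym by auto

end

locale gpair = lie_setup +
  fixes a b
  assumes pa: "pure_extremal sm br a" and pb: "pure_extremal sm br b" and gab: "g a b = 1"
begin

lemma ea: "extremal sm br a" using pa unfolding pure_extremal_def by blast
lemma eb: "extremal sm br b" using pb unfolding pure_extremal_def by blast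
lemma gba: "g b a = 1" using gab g_sym by metis
lemma gaa[simp]: "g a a = 0" using g_self_adj[OF ea] by blast
lemma gbb[simp]: "g b b = 0" using g_self_adj[OF eb] by blast
lemma gaa'[simp]: "g a (br a w) = 0" using g_self_adj[OF ea] by blast
lemma gbb'[simp]: "g b (br b w) = 0" using g_self_adj[OF eb] by blast
lemma gab_h[simp]: "g a (br a b) = 0" "g b (br b a) = 0" by simp_all
lemma gab_h2[simp]: "g b (br a b) = 0" "g a (br b a) = 0"
  using gbb'[of a] gaa'[of b] br_anti[of a b] by simp_all
lemma assoc_ab: "g (br a b) u = g a (br b u)" by (rule ASSOC2[OF pa pb])
lemma skew: "g b (br a u) = - g a (br b u)"
  using ASSOC[OF ea pb, of u] assoc_ab by simp
lemma Ea1: "br a (br a u) = sm (2 * g a u) a" by (rule E1[OF ea])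
lemma Eb1: "br b (br b u) = sm (2 * g b u) b" by (rule E1[OF eb])
lemma Ea3: "br a (br u (br a w)) = sm (g a (br u w)) a - sm (g a w) (br a u) - sm (g a u) (br a w)" by (rule E3[OF ea])
lemma Eb3: "br b (br u (br b w)) = sm (g b (br u w)) b - sm (g b w) (br b u) - sm (g b u) (br b w)" by (rule E3[OF eb])

lemma ahh: "br a (br a b) = a + a" using Ea1[of b] gab sm2[of 1 a] by simp
lemma bhh: "br b (br a b) = - (b + b)"
proof -
  have "br b (br a b) = - br b (br b a)" using br_anti[of a b] by simp
  then show ?thesis using Eb1[of a] gba sm2[of 1 b] by simp
qed

lemma sym: "gpair sm br g b a"
  by (unfold_locales) (simp_all add: pa pb gba lie simple gform)


lemma um_U: "um a b l \<in> gradU br g a b"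
proof -
  have bu: "br b (um a b l) = 0"
    unfolding um_def using Eb1[of l] bhh by (simp add: vsimps)
  have "g a (um a b l) = 0" unfolding um_def by (simp add: gab)
  moreover have "g b (um a b l) = 0" unfolding um_def by simp
  moreover have "g (br a b) (um a b l) = 0" unfolding assoc_ab bu by simp
  ultimately show ?thesis unfolding gradU_def
    using g_sym[of "um a b l" a] g_sym[of "um a b l" b] g_sym[of "um a b l" "br a b"] by simp
qed

lemma pm1_in: "pm1 a b l \<in> grading sm br g a b (-1)"
  unfolding grading_def pm1_def using um_U by simp

lemma pm2_in: "pm2 a b l \<in> grading sm br g a b (-2)"
  unfolding grading_def pm2_def by (auto simp: lspan_iff)

lemma hnb: "br a b \<notin> lspan sm b"
proof
  assume "br a b \<in> lspan sm b"
  then obtain s where hs: "br a b = sm s b" by (auto simp: lspan_iff)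
  have "br b w \<in> lspan sm b" for w
  proof -
    have ba: "br b a = - sm s b" using hs br_anti[of b a] by simp
    have "br b (br a (br b w)) = br (br b a) (br b w) + br a (br b (br b w))" by (rule jacobi)
    also have "... = 0" unfolding ba using hs by (simp add: Eb1 algebra_simps)
    finally have "0 = sm (g b (br a w)) b - sm (g b w) (br b a) - sm (g b a) (br b w)"
      using Eb3[of a w] by simp
    then have "br b w = sm (g b (br a w) + g b w * s) b"
      unfolding ba gba by (simp add: vs.scale_left_distrib algebra_simps eq_neg_iff_add_eq_0)
    then show ?thesis unfolding lspan_iff by blast
  qed
  then show False using AD ext_nz[OF eb] by blast
qed

lemma hnb': "br b a \<notin> lspan sm b"
proof
  assume "br b a \<in> lspan sm b"
  then obtain s where "br b a = sm s b" by (auto simp: lspan_iff)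
  then have "br a b = sm (-s) b" using br_anti[of a b] by simp
  then show False using hnb unfolding lspan_iff by blast
qed


lemma U_facts:
  assumes "u \<in> gradU br g a b"
  shows "g a u = 0" "g b u = 0" "g a (br b u) = 0" "g b (br a u) = 0"
proof -
  have h: "g u a = 0" "g u b = 0" "g u (br a b) = 0" using assms unfolding gradU_def by auto
  show ga: "g a u = 0" using h g_sym[of u a] by simp
  show "g b u = 0" using h g_sym[of u b] by simp
  show gab': "g a (br b u) = 0" using h g_sym[of u "br a b"] assoc_ab[of u] by simp
  show "g b (br a u) = 0" using skew[of u] gab' by simp
qed

lemma Lm1:
  assumes "l \<in> grading sm br g a b (-1)"
  shows "pm1 a b l = l" "pm2 a b l = 0" "pm1 b a l = 0" "pm2 b a l = 0"
proof -
  obtain u where u: "u \<in> gradU br g a b" and l: "l = br a u"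
    using assms unfolding grading_def by auto
  note f = U_facts[OF u]
  have aau: "br a (br a u) = 0" using Ea1[of u] f by simp
  have x1: "g a (br b (br a u)) = 0" using skew[of "br a u"] aau by simp
  show "pm2 a b l = 0" unfolding l pm2_def using f by simp
  show "pm2 b a l = 0" unfolding l pm2_def by simp
  show "pm1 b a l = 0" unfolding l pm1_def um_def using aau by simp
  have "pm1 a b l = - br a (br b (br a u))" unfolding l pm1_def um_def using x1 f by simp
  also have "... = br a u" using Ea3[of b u] f gab by simp
  finally show "pm1 a b l = l" using l by simp
qed

lemma Lm2:
  assumes "l \<in> grading sm br g a b (-2)"
  shows "pm2 a b l = l" "pm1 a b l = 0" "pm1 b a l = 0" "pm2 b a l = 0"
proof -
  obtain t where l: "l = sm t a" using assms unfolding grading_def by (auto simp: lspan_iff)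
  have "pm2 a b a = a" unfolding pm2_def using gba by simp
  then show "pm2 a b l = l" unfolding l pm2_sm by simp
  have "um a b a = 0" unfolding um_def using gba br_anti[of b a] by simp
  then have "pm1 a b a = 0" unfolding pm1_def by simp
  then show "pm1 a b l = 0" unfolding l pm1_sm by simp
  have "um b a a = 0" unfolding um_def by simp
  then have "pm1 b a a = 0" unfolding pm1_def by simp
  then show "pm1 b a l = 0" unfolding l pm1_sm by simp
  have "pm2 b a a = 0" unfolding pm2_def by simp
  then show "pm2 b a l = 0" unfolding l pm2_sm by simp
qed

lemma L0_half:
  assumes "l \<in> grading sm br g a b 0"
  shows "g b l = 0" "pm1 a b l = 0" "pm2 a b l = 0"
proof -
  obtain al where al: "br a l = sm al a" using assms unfolding grading_def by (auto simp: lspan_iff)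
  obtain ga where ga: "br b l = sm ga b" using assms unfolding grading_def by (auto simp: lspan_iff)
  have "br b (br a (br b l)) = sm ga (br b (br a b))" unfolding ga by simp
  also have "... = - sm (ga + ga) b" using bhh by (simp add: vsimps)
  finally have "- sm (ga + ga) b = sm (g b (br a l)) b - sm (g b l) (br b a) - sm (g b a) (br b l)"
    using Eb3[of a l] by simp
  then have "sm (g b l) (br b a) = sm (g b (br a l)) b - sm (g b a) (br b l) - (- sm (ga + ga) b)"
    by (rule solve3)
  also have "... \<in> lspan sm b" unfolding ga
    by (intro lspan_diff lspan_sm lspan_self lspan_neg)
  finally have "sm (g b l) (br b a) \<in> lspan sm b" .
  then show gbl: "g b l = 0" using lspan_sm_inv hnb' by blast
  show "pm2 a b l = 0" unfolding pm2_def gbl by simp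
  show "pm1 a b l = 0" unfolding pm1_def um_def ga gbl using gab by simp
qed

lemma p0_a: "br a (p0 a b l) \<in> lspan sm a"
proof -
  let ?be = "g b (br a l)"
  have t1: "br a (pm2 a b l) = 0" unfolding pm2_def by simp
  have t2: "br a (pm1 a b l) = 0" unfolding pm1_def using Ea1[of "um a b l"] U_facts(1)[OF um_U] by simp
  have t3: "br a (pm2 b a l) = sm (g a l) (br a b)" unfolding pm2_def by simp
  have bba: "br b (br b a) = b + b" using Eb1[of a] gba sm2[of 1 b] by simp
  have aba: "br a (br b a) = - (a + a)" using ahh br_anti[of b a] by simp
  have e3: "br a (br b (br a l)) = sm (g a (br b l)) a - sm (g a l) (br a b) - br a l"
    using Ea3[of b l] gab by simp
  have "br a (pm1 b a l) = - br a (br b (br a l)) + sm ?be (br a (br b a)) - sm (g a l) (br a (br b (br b a)))"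
    unfolding pm1_def um_def by simp
  also have "... = br a l - sm (g a l) (br a b) - sm (g a (br b l) + ?be + ?be) a"
    unfolding e3 aba bba by (simp add: vsimps algebra_simps)
  finally have t4: "br a (pm1 b a l) = br a l - sm (g a l) (br a b) - sm (g a (br b l) + ?be + ?be) a" .
  have "br a (p0 a b l) = sm (g a (br b l) + ?be + ?be) a"
    unfolding p0_def by (simp add: t1 t2 t3 t4)
  then show ?thesis unfolding lspan_iff by blast
qed


lemma L0_full:
  assumes l: "l \<in> grading sm br g a b 0"
  shows "pm2 a b l = 0" "pm1 a b l = 0" "pm1 b a l = 0" "pm2 b a l = 0" "p0 a b l = l"
proof -
  interpret sw: gpair sm br g b a by (rule sym)
  have l': "l \<in> grading sm br g b a 0" using l grading_sym[of b a 0] by simp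
  show a1: "pm2 a b l = 0" "pm1 a b l = 0" using L0_half[OF l] by blast+
  show a2: "pm2 b a l = 0" "pm1 b a l = 0" using sw.L0_half[OF l'] by blast+
  show "p0 a b l = l" unfolding p0_def using a1 a2 by simp
qed

lemma p0_in: "p0 a b l \<in> grading sm br g a b 0"
proof -
  interpret sw: gpair sm br g b a by (rule sym)
  have "br b (p0 a b l) \<in> lspan sm b" using sw.p0_a[of l] p0_sym by simp
  then show ?thesis unfolding grading_def using p0_a by simp
qed

lemma rng: "i \<in> {-2..2} \<longleftrightarrow> i = -2 \<or> i = -1 \<or> i = 0 \<or> i = 1 \<or> (i::int) = 2" by auto

lemma proj_in: "i \<in> {-2..2} \<Longrightarrow> proj a b i l \<in> grading sm br g a b i"
proof -
  interpret sw: gpair sm br g b a by (rule sym)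
  assume "i \<in> {-2..2}"
  then consider "i = -2" | "i = -1" | "i = 0" | "i = 1" | "i = 2" unfolding rng by blast
  then show ?thesis
  proof cases
    case 1 then show ?thesis unfolding proj_def using pm2_in by simp
  next
    case 2 then show ?thesis unfolding proj_def using pm1_in by simp
  next
    case 3 then show ?thesis unfolding proj_def using p0_in by simp
  next
    case 4 then show ?thesis unfolding proj_def using sw.pm1_in[of l] grading_sym[of b a 1] by simp
  next
    case 5 then show ?thesis unfolding proj_def using sw.pm2_in[of l] grading_sym[of b a 2] by simp
  qed
qed

lemma proj_id:
  assumes i: "i \<in> {-2..2}" and l: "l \<in> grading sm br g a b i"
  shows "proj a b j l = (if j = i then l else 0)"
proof -
  interpret sw: gpair sm br g b a by (rule sym)
  from i consider "i = -2" | "i = -1" | "i = 0" | "i = 1" | "i = 2" unfolding rng by blast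
  then show ?thesis
  proof cases
    case 1
    note f = Lm2[OF l[unfolded 1]]
    show ?thesis unfolding proj_def p0_def 1 using f by simp
  next
    case 2
    note f = Lm1[OF l[unfolded 2]]
    show ?thesis unfolding proj_def p0_def 2 using f by simp
  next
    case 3
    note f = L0_full[OF l[unfolded 3]]
    show ?thesis unfolding proj_def 3 using f by simp
  next
    case 4
    have l': "l \<in> grading sm br g b a (-1)" using l grading_sym[of b a 1] 4 by simp
    note f = sw.Lm1[OF l']
    show ?thesis unfolding proj_def p0_def 4 using f by simp
  next
    case 5
    have l': "l \<in> grading sm br g b a (-2)" using l grading_sym[of b a 2] 5 by simp
    note f = sw.Lm2[OF l']
    show ?thesis unfolding proj_def p0_def 5 using f by simp
  qed
qed

lemma proj_sum: "l = proj a b (-2) l + proj a b (-1) l + proj a b 0 l + proj a b 1 l + proj a b 2 l"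
  unfolding proj_def p0_def by (simp add: algebra_simps)

lemma mem_iff: "i \<in> {-2..2} \<Longrightarrow> l \<in> grading sm br g a b i \<longleftrightarrow> proj a b i l = l"
  using proj_in[of i l] proj_id[of i l i] by metis

lemma m1_U: "l \<in> grading sm br g a b (-1) \<Longrightarrow> l \<in> gradU br g a b"
proof -
  assume "l \<in> grading sm br g a b (-1)"
  then obtain u where u: "u \<in> gradU br g a b" and l: "l = br a u" unfolding grading_def by auto
  note f = U_facts[OF u]
  have aau: "br a (br a u) = 0" using Ea1[of u] f by simp
  have x1: "g a (br b (br a u)) = 0" using skew[of "br a u"] aau by simp
  show ?thesis unfolding gradU_def l
    using f g_sym[of "br a u" a] g_sym[of "br a u" b] g_sym[of "br a u" "br a b"] assoc_ab[of "br a u"] x1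
    by simp
qed

lemma m1_inv: "l \<in> grading sm br g a b (-1) \<Longrightarrow> br a (br b l) = - l"
proof -
  assume "l \<in> grading sm br g a b (-1)"
  then obtain u where u: "u \<in> gradU br g a b" and l: "l = br a u" unfolding grading_def by auto
  note f = U_facts[OF u]
  show ?thesis unfolding l using Ea3[of b u] f gab by simp
qed

lemma m1_to_1: "l \<in> grading sm br g a b (-1) \<Longrightarrow> br b l \<in> grading sm br g a b 1"
  using m1_U unfolding grading_def by auto

lemma commute_br: "br x y = 0 \<Longrightarrow> br x (br y z) = br y (br x z)"
  using jacobi[of x y z] by simp

lemma orth:
  assumes ee: "extremal sm br e" and ea0: "br e a = 0" and eb0: "br e b = 0"
  shows "proj a b i (br e l) = br e (proj a b i l)"
    and "i \<noteq> 0 \<Longrightarrow> g e (proj a b i l) = 0"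
    and "proj a b i e = (if i = 0 then e else 0)"
proof -
  have ae0: "br a e = 0" using ea0 br_anti[of a e] by simp
  have be0: "br b e = 0" using eb0 br_anti[of b e] by simp
  have c1: "g e a = 0" "g e (br a w) = 0" for w using comm_lemma[OF ee ea0] by auto
  have c2: "g e b = 0" "g e (br b w) = 0" for w using comm_lemma[OF ee eb0] by auto
  have c3: "g a e = 0" "g a (br e w) = 0" for w using comm_lemma[OF ea ae0] by auto
  have c4: "g b e = 0" "g b (br e w) = 0" for w using comm_lemma[OF eb be0] by auto
  have eh: "br e (br a b) = 0" using jacobi[of e a b] ea0 eb0 by simp
  have eh': "br e (br b a) = 0" using jacobi[of e b a] ea0 eb0 by simp
  have P1: "pm1 a b (br e l) = br e (pm1 a b l)"
    unfolding pm1_def um_def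
    using commute_br[OF eb0, of l, symmetric] commute_br[OF ea0] c3 c4 eh by simp
  have P1': "pm1 b a (br e l) = br e (pm1 b a l)"
    unfolding pm1_def um_def
    using commute_br[OF ea0, of l, symmetric] commute_br[OF eb0] c3 c4 eh' by simp
  have P2: "pm2 a b (br e l) = br e (pm2 a b l)" unfolding pm2_def using c4 ea0 by simp
  have P2': "pm2 b a (br e l) = br e (pm2 b a l)" unfolding pm2_def using c3 eb0 by simp
  show "proj a b i (br e l) = br e (proj a b i l)"
    unfolding proj_def p0_def using P1 P1' P2 P2' by simp
  show "i \<noteq> 0 \<Longrightarrow> g e (proj a b i l) = 0"
    unfolding proj_def pm1_def pm2_def using c1 c2 by simp
  have "e \<in> grading sm br g a b 0" unfolding grading_def using ae0 be0 lspan_zero by simp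
  then show "proj a b i e = (if i = 0 then e else 0)"
    using proj_id[of 0 e i] by (cases "i \<in> {-2..2}") (auto simp: proj_def)
qed


lemma comm_proj:
  assumes fa: "\<And>u v. f (u + v) = f u + f v" and fs: "\<And>t u. f (sm t u) = sm t (f u)"
    and fA: "\<And>u. f (br a u) = br a (f u)" and fB: "\<And>u. f (br b u) = br b (f u)"
    and f0a: "f a = 0" and f0b: "f b = 0" and fga: "\<And>u. g a (f u) = 0" and fgb: "\<And>u. g b (f u) = 0"
  shows "proj a b i (f l) = f (proj a b i l)"
proof -
  have fn: "f (- u) = - f u" for u using fs[of "-1" u] by simp
  have fd: "f (u - v) = f u - f v" for u v using fa[of u "- v"] fn[of v] by simp
  have fh: "f (br a b) = 0" using fA[of b] f0b by simp
  have fh': "f (br b a) = 0" using fB[of a] f0a by simp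
  have x1: "g a (br b (f l)) = 0" using fga[of "br b l"] fB[of l] by simp
  have x2: "g b (br a (f l)) = 0" using fgb[of "br a l"] fA[of l] by simp
  have P1: "pm1 a b (f l) = f (pm1 a b l)"
    unfolding pm1_def um_def using x1 fga fgb fA fB fh fs fn fd f0b by simp
  have P1': "pm1 b a (f l) = f (pm1 b a l)"
    unfolding pm1_def um_def using x2 fga fgb fA fB fh' fs fn fd f0a by simp
  have P2: "pm2 a b (f l) = f (pm2 a b l)" unfolding pm2_def using fgb fs f0a by simp
  have P2': "pm2 b a (f l) = f (pm2 b a l)" unfolding pm2_def using fga fs f0b by simp
  have f00: "f 0 = 0" using fs[of 0 0] by simp
  show ?thesis unfolding proj_def p0_def using P1 P1' P2 P2' fd f00 by simp
qed

lemma gr_add: "i \<in> {-2..2} \<Longrightarrow> l \<in> grading sm br g a b i \<Longrightarrow> m \<in> grading sm br g a b i \<Longrightarrow> l + m \<in> grading sm br g a b i"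
  using mem_iff proj_add by metis
lemma gr_neg: "i \<in> {-2..2} \<Longrightarrow> l \<in> grading sm br g a b i \<Longrightarrow> - l \<in> grading sm br g a b i"
  using mem_iff proj_neg by metis

lemma uniq3:
  assumes i: "i1 \<in> {-2..2}" "i2 \<in> {-2..2}" "i3 \<in> {-2..2}" and dist: "i1 \<noteq> i2" "i1 \<noteq> i3" "i2 \<noteq> i3"
    and l: "l1 \<in> grading sm br g a b i1" "l2 \<in> grading sm br g a b i2" "l3 \<in> grading sm br g a b i3"
    and z: "l1 + l2 + l3 = 0"
  shows "l1 = 0 \<and> l2 = 0 \<and> l3 = 0"
proof -
  have "proj a b k (l1 + l2 + l3) = proj a b k l1 + proj a b k l2 + proj a b k l3" for k
    by (simp add: proj_add)
  then have "proj a b k l1 + proj a b k l2 + proj a b k l3 = 0" for k using z proj_zero by metis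
  note e = this[of i1] this[of i2] this[of i3]
  show ?thesis using e proj_id[OF i(1) l(1)] proj_id[OF i(2) l(2)] proj_id[OF i(3) l(3)] dist by auto
qed

lemma p1_inv: "m \<in> grading sm br g a b 1 \<Longrightarrow> br b (br a m) = - m \<and> br a m \<in> grading sm br g a b (-1)"
proof -
  interpret sw: gpair sm br g b a by (rule sym)
  assume "m \<in> grading sm br g a b 1"
  then have m: "m \<in> grading sm br g b a (-1)" using grading_sym[of b a 1] by simp
  show ?thesis using sw.m1_inv[OF m] sw.m1_to_1[OF m] grading_sym[of b a "-1"] by simp
qed

end

lemma (in lie_setup) proj0_eq: "proj a b 0 l = l - proj a b (-2) l - proj a b (-1) l - proj a b 1 l - proj a b 2 l"
  unfolding proj_def p0_def by simp

lemma ds3I: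
  assumes "\<And>l. l \<in> S \<Longrightarrow> \<exists>a b c. a \<in> A \<and> b \<in> B \<and> c \<in> C \<and> l = a + b + c"
    and "\<And>a b c. a \<in> A \<Longrightarrow> b \<in> B \<Longrightarrow> c \<in> C \<Longrightarrow> a + b + c \<in> S"
    and "\<And>a b c. a \<in> A \<Longrightarrow> b \<in> B \<Longrightarrow> c \<in> C \<Longrightarrow> a + b + c = 0 \<Longrightarrow> a = 0 \<and> b = 0 \<and> c = 0"
  shows "direct_sum3 S A B C"
  unfolding direct_sum3_def using assms by blast





theorem proposition5p7:
  fixes sm :: "'k::field \<Rightarrow> 'l::ab_group_add \<Rightarrow> 'l"
    and br :: "'l \<Rightarrow> 'l \<Rightarrow> 'l"
    and g :: "'l \<Rightarrow> 'l \<Rightarrow> 'k"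
    and x y c d :: 'l
  assumes lie: "lie_algebra sm br"
    and simple: "lie_simple sm br"
    and gen: "generated_by_pure_extremal sm br"
    and card_k: "infinite (UNIV :: 'k set) \<or> card (UNIV :: 'k set) > 2"
    and ext: "\<exists>(\<sigma> :: 'k \<Rightarrow> 'K::field) (smK :: 'K \<Rightarrow> 'm::ab_group_add \<Rightarrow> 'm) brK \<phi>.
                galois_ext_deg_le2 \<sigma> \<and> scalar_extension sm br \<sigma> smK brK \<phi> \<and> has_lines smK brK"
    and symp_exists: "\<exists>a b. symplectic sm br a b"
    and gform: "extremal_form sm br g"
    and E: "extremal sm br x" "extremal sm br y" "extremal sm br c" "extremal sm br d"
    and gxy: "g x y = 1" and gcd: "g c d = 1"
    and symp: "symplectic sm br x c" "symplectic sm br c y"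
              "symplectic sm br y d" "symplectic sm br d x"
  shows "direct_sum3 (grading sm br g x y (-1))
           (grading sm br g x y (-1) \<inter> grading sm br g c d (-1))
           (grading sm br g x y (-1) \<inter> grading sm br g c d 0)
           (grading sm br g x y (-1) \<inter> grading sm br g c d 1)
       \<and> direct_sum3 (grading sm br g x y 1)
           (br y ` (grading sm br g x y (-1) \<inter> grading sm br g c d (-1)))
           (br y ` (grading sm br g x y (-1) \<inter> grading sm br g c d 0))
           (br y ` (grading sm br g x y (-1) \<inter> grading sm br g c d 1))
       \<and> direct_sum3 (grading sm br g c d (-1))
           (grading sm br g x y (-1) \<inter> grading sm br g c d (-1))
           (grading sm br g x y 0 \<inter> grading sm br g c d (-1))
           (br y ` (grading sm br g x y (-1) \<inter> grading sm br g c d (-1)))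
       \<and> direct_sum3 (grading sm br g c d 1)
           (grading sm br g x y (-1) \<inter> grading sm br g c d 1)
           (br d ` (grading sm br g x y 0 \<inter> grading sm br g c d (-1)))
           (br y ` (grading sm br g x y (-1) \<inter> grading sm br g c d 1))"
proof -
  interpret lie_setup sm br g using lie simple gform by (rule lie_setup.intro)
  have px: "pure_extremal sm br x" and pc: "pure_extremal sm br c" and xc: "br x c = 0"
    using symp(1) unfolding symplectic_def by blast+
  have py: "pure_extremal sm br y" and cy: "br c y = 0"
    using symp(2) unfolding symplectic_def by blast+
  have pd: "pure_extremal sm br d" and yd: "br y d = 0"
    using symp(3) unfolding symplectic_def by blast+
  have dx: "br d x = 0"
    using symp(4) unfolding symplectic_def by blast+
  have cx: "br c x = 0" using xc br_anti[of c x] by simp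
  have yc: "br y c = 0" using cy br_anti[of y c] by simp
  have dy: "br d y = 0" using yd br_anti[of d y] by simp
  have xd: "br x d = 0" using dx br_anti[of x d] by simp
  interpret X: gpair sm br g x y
    using lie simple gform px py gxy by (simp add: gpair_def gpair_axioms_def lie_setup_def)
  interpret C: gpair sm br g c d
    using lie simple gform pc pd gcd by (simp add: gpair_def gpair_axioms_def lie_setup_def)
  note Cx = C.orth[OF E(1) xc xd]
  note Cy = C.orth[OF E(2) yc yd]
  note Xc = X.orth[OF E(3) cx cy]
  note Xd = X.orth[OF E(4) dx dy]
  let ?Lx = "grading sm br g x y" and ?Lc = "grading sm br g c d"
  have F1': "proj x y i (proj c d j l) = proj c d j (proj x y i l)" if j0: "j \<noteq> 0" for i j l
    by (rule X.comm_proj) (auto simp: proj_add proj_sm Cx Cy j0)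
  have F2': "proj c d i (proj x y j l) = proj x y j (proj c d i l)" if j0: "j \<noteq> 0" for i j l
    by (rule C.comm_proj) (auto simp: proj_add proj_sm Xc Xd j0)
  have F1: "proj x y i (proj c d j l) = proj c d j (proj x y i l)" for i j l
  proof (cases "j = 0")
    case True
    show ?thesis unfolding True proj0_eq[of c d] by (simp add: proj_diff F1')
  qed (rule F1')
  have F2: "proj c d i (proj x y j l) = proj x y j (proj c d i l)" for i j l
  proof (cases "j = 0")
    case True
    show ?thesis unfolding True proj0_eq[of x y] by (simp add: proj_diff F2')
  qed (rule F2')
  have r: "(-2::int) \<in> {-2..2}" "(-1::int) \<in> {-2..2}" "(0::int) \<in> {-2..2}" "(1::int) \<in> {-2..2}" "(2::int) \<in> {-2..2}"
    by auto
  have dec1: "l = proj c d (-1) l + proj c d 0 l + proj c d 1 l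
        \<and> proj c d j l \<in> ?Lx (-1)" if l: "l \<in> ?Lx (-1)" for l j
  proof
    have pl: "proj x y (-1) l = l" using X.mem_iff[OF r(2)] l by blast
    have gd: "g d l = 0" using Xd(2)[of "-1" l] pl by simp
    have gc: "g c l = 0" using Xc(2)[of "-1" l] pl by simp
    have "proj c d (-2) l = 0" "proj c d 2 l = 0" unfolding proj_def pm2_def using gd gc by simp_all
    then show "l = proj c d (-1) l + proj c d 0 l + proj c d 1 l" using C.proj_sum[of l] by simp
    show "proj c d j l \<in> ?Lx (-1)" using X.mem_iff[OF r(2)] F1[of "-1" j l] pl by simp
  qed
  have c1: "direct_sum3 (?Lx (-1)) (?Lx (-1) \<inter> ?Lc (-1)) (?Lx (-1) \<inter> ?Lc 0) (?Lx (-1) \<inter> ?Lc 1)"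
  proof (rule ds3I)
    fix l assume l: "l \<in> ?Lx (-1)"
    show "\<exists>a b c. a \<in> ?Lx (-1) \<inter> ?Lc (-1) \<and> b \<in> ?Lx (-1) \<inter> ?Lc 0 \<and> c \<in> ?Lx (-1) \<inter> ?Lc 1 \<and> l = a + b + c"
      using dec1[OF l] C.proj_in[OF r(2)] C.proj_in[OF r(3)] C.proj_in[OF r(4)] by blast
  next
    fix p q s assume "p \<in> ?Lx (-1) \<inter> ?Lc (-1)" "q \<in> ?Lx (-1) \<inter> ?Lc 0" "s \<in> ?Lx (-1) \<inter> ?Lc 1"
    then show "p + q + s \<in> ?Lx (-1)" using X.gr_add[OF r(2)] by blast
  next
    fix p q s assume "p \<in> ?Lx (-1) \<inter> ?Lc (-1)" "q \<in> ?Lx (-1) \<inter> ?Lc 0" "s \<in> ?Lx (-1) \<inter> ?Lc 1" "p + q + s = 0"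
    then show "p = 0 \<and> q = 0 \<and> s = 0" using C.uniq3[OF r(2) r(3) r(4), of p q s] by simp
  qed

  have negx: "- br x m \<in> ?Lx (-1) \<and> br y (- br x m) = m" if m: "m \<in> ?Lx 1" for m
    using X.p1_inv[OF m] X.gr_neg[OF r(2)] by simp
  have c2: "direct_sum3 (?Lx 1) (br y ` (?Lx (-1) \<inter> ?Lc (-1))) (br y ` (?Lx (-1) \<inter> ?Lc 0)) (br y ` (?Lx (-1) \<inter> ?Lc 1))"
  proof (rule ds3I)
    fix m assume m: "m \<in> ?Lx 1"
    define l where "l = - br x m"
    have l: "l \<in> ?Lx (-1)" and ml: "m = br y l" using negx[OF m] unfolding l_def by auto
    have "m = br y (proj c d (-1) l) + br y (proj c d 0 l) + br y (proj c d 1 l)"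
      using dec1[OF l] ml by (metis br_addR)
    then show "\<exists>p q s. p \<in> br y ` (?Lx (-1) \<inter> ?Lc (-1)) \<and> q \<in> br y ` (?Lx (-1) \<inter> ?Lc 0) \<and> s \<in> br y ` (?Lx (-1) \<inter> ?Lc 1) \<and> m = p + q + s"
      using dec1[OF l] C.proj_in[OF r(2)] C.proj_in[OF r(3)] C.proj_in[OF r(4)] by blast
  next
    fix p q s assume "p \<in> br y ` (?Lx (-1) \<inter> ?Lc (-1))" "q \<in> br y ` (?Lx (-1) \<inter> ?Lc 0)" "s \<in> br y ` (?Lx (-1) \<inter> ?Lc 1)"
    then obtain v w u where v: "v \<in> ?Lx (-1)" and w: "w \<in> ?Lx (-1)" and u: "u \<in> ?Lx (-1)"
      and e: "p = br y v" "q = br y w" "s = br y u" by blast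
    have "v + w + u \<in> ?Lx (-1)" using X.gr_add[OF r(2)] v w u by blast
    then have "br y (v + w + u) \<in> ?Lx 1" by (rule X.m1_to_1)
    then show "p + q + s \<in> ?Lx 1" unfolding e by simp
  next
    fix p q s assume "p \<in> br y ` (?Lx (-1) \<inter> ?Lc (-1))" "q \<in> br y ` (?Lx (-1) \<inter> ?Lc 0)" "s \<in> br y ` (?Lx (-1) \<inter> ?Lc 1)"
      and z: "p + q + s = 0"
    then obtain v w u where v: "v \<in> ?Lx (-1) \<inter> ?Lc (-1)" and w: "w \<in> ?Lx (-1) \<inter> ?Lc 0" and u: "u \<in> ?Lx (-1) \<inter> ?Lc 1"
      and e: "p = br y v" "q = br y w" "s = br y u" by blast
    have t: "v + w + u \<in> ?Lx (-1)" using X.gr_add[OF r(2)] v w u by blast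
    have h: "br y (v + w + u) = 0" using z unfolding e by simp
    have "v + w + u = 0" by (metis h X.m1_inv[OF t] br_zeroR neg_equal_0_iff_equal)
    then have "v = 0 \<and> w = 0 \<and> u = 0" using C.uniq3[OF r(2) r(3) r(4), of v w u] v w u by auto
    then show "p = 0 \<and> q = 0 \<and> s = 0" unfolding e by simp
  qed
  have c3: "direct_sum3 (?Lc (-1)) (?Lx (-1) \<inter> ?Lc (-1)) (?Lx 0 \<inter> ?Lc (-1)) (br y ` (?Lx (-1) \<inter> ?Lc (-1)))"
  proof (rule ds3I)
    fix l assume l: "l \<in> ?Lc (-1)"
    have pl: "proj c d (-1) l = l" using C.mem_iff[OF r(2)] l by blast
    have gy: "g y l = 0" using Cy(2)[of "-1" l] pl by simp
    have gx: "g x l = 0" using Cx(2)[of "-1" l] pl by simp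
    have "proj x y (-2) l = 0" "proj x y 2 l = 0" unfolding proj_def pm2_def using gy gx by simp_all
    then have sum: "l = proj x y (-1) l + proj x y 0 l + proj x y 1 l" using X.proj_sum[of l] by simp
    have inC: "proj x y j l \<in> ?Lc (-1)" for j using C.mem_iff[OF r(2)] F2[of "-1" j l] pl by simp
    define m where "m = proj x y 1 l"
    have m1: "m \<in> ?Lx 1" unfolding m_def by (rule X.proj_in[OF r(4)])
    have mc: "m \<in> ?Lc (-1)" unfolding m_def by (rule inC)
    define v where "v = - br x m"
    have vx: "v \<in> ?Lx (-1)" and mv: "m = br y v" using negx[OF m1] unfolding v_def by auto
    have "br x m \<in> ?Lc (-1)" using C.mem_iff[OF r(2)] mc Cx(1)[of "-1" m] by simp
    then have vc: "v \<in> ?Lc (-1)" unfolding v_def using C.gr_neg[OF r(2)] by blast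
    show "\<exists>p q s. p \<in> ?Lx (-1) \<inter> ?Lc (-1) \<and> q \<in> ?Lx 0 \<inter> ?Lc (-1) \<and> s \<in> br y ` (?Lx (-1) \<inter> ?Lc (-1)) \<and> l = p + q + s"
      using sum inC X.proj_in[OF r(2)] X.proj_in[OF r(3)] vx vc mv unfolding m_def[symmetric] by blast
  next
    fix p q s assume p: "p \<in> ?Lx (-1) \<inter> ?Lc (-1)" and q: "q \<in> ?Lx 0 \<inter> ?Lc (-1)" and "s \<in> br y ` (?Lx (-1) \<inter> ?Lc (-1))"
    then obtain v where v: "v \<in> ?Lx (-1) \<inter> ?Lc (-1)" and e: "s = br y v" by blast
    have "s \<in> ?Lc (-1)" unfolding e using C.mem_iff[OF r(2)] v Cy(1)[of "-1" v] by simp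
    then show "p + q + s \<in> ?Lc (-1)" using p q C.gr_add[OF r(2)] by blast
  next
    fix p q s assume p: "p \<in> ?Lx (-1) \<inter> ?Lc (-1)" and q: "q \<in> ?Lx 0 \<inter> ?Lc (-1)" and "s \<in> br y ` (?Lx (-1) \<inter> ?Lc (-1))"
      and z: "p + q + s = 0"
    then obtain v where v: "v \<in> ?Lx (-1) \<inter> ?Lc (-1)" and e: "s = br y v" by blast
    have "s \<in> ?Lx 1" unfolding e using X.m1_to_1 v by blast
    then show "p = 0 \<and> q = 0 \<and> s = 0" using X.uniq3[OF r(2) r(3) r(4), of p q s] p q z by simp
  qed
  have c4: "direct_sum3 (?Lc 1) (?Lx (-1) \<inter> ?Lc 1) (br d ` (?Lx 0 \<inter> ?Lc (-1))) (br y ` (?Lx (-1) \<inter> ?Lc 1))"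
  proof (rule ds3I)
    fix l assume l: "l \<in> ?Lc 1"
    have pl: "proj c d 1 l = l" using C.mem_iff[OF r(4)] l by blast
    have gy: "g y l = 0" using Cy(2)[of 1 l] pl by simp
    have gx: "g x l = 0" using Cx(2)[of 1 l] pl by simp
    have "proj x y (-2) l = 0" "proj x y 2 l = 0" unfolding proj_def pm2_def using gy gx by simp_all
    then have sum: "l = proj x y (-1) l + proj x y 0 l + proj x y 1 l" using X.proj_sum[of l] by simp
    have inC: "proj x y j l \<in> ?Lc 1" for j using C.mem_iff[OF r(4)] F2[of 1 j l] pl by simp
    define m0 where "m0 = proj x y 0 l"
    have m0x: "m0 \<in> ?Lx 0" unfolding m0_def by (rule X.proj_in[OF r(3)])
    have m0c: "m0 \<in> ?Lc 1" unfolding m0_def by (rule inC)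
    define xi where "xi = - br c m0"
    have ci: "br d (br c m0) = - m0 \<and> br c m0 \<in> ?Lc (-1)" by (rule C.p1_inv[OF m0c])
    have xic: "xi \<in> ?Lc (-1)" unfolding xi_def using ci C.gr_neg[OF r(2)] by blast
    have "br c m0 \<in> ?Lx 0" using X.mem_iff[OF r(3)] m0x Xc(1)[of 0 m0] by simp
    then have xix: "xi \<in> ?Lx 0" unfolding xi_def using X.gr_neg[OF r(3)] by blast
    have m0e: "m0 = br d xi" unfolding xi_def using ci by simp
    define m where "m = proj x y 1 l"
    have m1: "m \<in> ?Lx 1" unfolding m_def by (rule X.proj_in[OF r(4)])
    have mc: "m \<in> ?Lc 1" unfolding m_def by (rule inC)
    define v where "v = - br x m"
    have vx: "v \<in> ?Lx (-1)" and mv: "m = br y v" using negx[OF m1] unfolding v_def by auto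
    have "br x m \<in> ?Lc 1" using C.mem_iff[OF r(4)] mc Cx(1)[of 1 m] by simp
    then have vc: "v \<in> ?Lc 1" unfolding v_def using C.gr_neg[OF r(4)] by blast
    show "\<exists>p q s. p \<in> ?Lx (-1) \<inter> ?Lc 1 \<and> q \<in> br d ` (?Lx 0 \<inter> ?Lc (-1)) \<and> s \<in> br y ` (?Lx (-1) \<inter> ?Lc 1) \<and> l = p + q + s"
      using sum inC X.proj_in[OF r(2)] xix xic m0e vx vc mv unfolding m_def[symmetric] m0_def[symmetric] by blast
  next
    fix p q s assume p: "p \<in> ?Lx (-1) \<inter> ?Lc 1" and "q \<in> br d ` (?Lx 0 \<inter> ?Lc (-1))" and "s \<in> br y ` (?Lx (-1) \<inter> ?Lc 1)"
    then obtain xi v where xi: "xi \<in> ?Lx 0 \<inter> ?Lc (-1)" and v: "v \<in> ?Lx (-1) \<inter> ?Lc 1"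
      and e: "q = br d xi" "s = br y v" by blast
    have "q \<in> ?Lc 1" unfolding e using C.m1_to_1 xi by blast
    moreover have "s \<in> ?Lc 1" unfolding e using C.mem_iff[OF r(4)] v Cy(1)[of 1 v] by simp
    ultimately show "p + q + s \<in> ?Lc 1" using p C.gr_add[OF r(4)] by blast
  next
    fix p q s assume p: "p \<in> ?Lx (-1) \<inter> ?Lc 1" and "q \<in> br d ` (?Lx 0 \<inter> ?Lc (-1))" and "s \<in> br y ` (?Lx (-1) \<inter> ?Lc 1)"
      and z: "p + q + s = 0"
    then obtain xi v where xi: "xi \<in> ?Lx 0 \<inter> ?Lc (-1)" and v: "v \<in> ?Lx (-1) \<inter> ?Lc 1"
      and e: "q = br d xi" "s = br y v" by blast
    have "q \<in> ?Lx 0" unfolding e using X.mem_iff[OF r(3)] xi Xd(1)[of 0 xi] by simp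
    moreover have "s \<in> ?Lx 1" unfolding e using X.m1_to_1 v by blast
    ultimately show "p = 0 \<and> q = 0 \<and> s = 0" using X.uniq3[OF r(2) r(3) r(4), of p q s] p z by simp
  qed
  show ?thesis using c1 c2 c3 c4 by blast
qed


end
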